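(* Let $0\le \alpha<1$ and let $f=h+\overline{g}\in \mathcal{P}^{0}_{\mathcal{H}}(\alpha)$. Then for every $z\in\mathbb{D}$, $$|z|+\sum_{n=2}^{\infty}\frac{2(1-\alpha)(-1)^{n-1}}{n}|z|^{n}\;\le\; |f(z)|\;\le\; |z|+\sum_{n=2}^{\infty}\frac{2(1-\alpha)}{n}|z|^{n}.$$ Both inequalities are sharp: for $f_\alpha(z)=z+\sum_{n=2}^{\infty}\frac{2(1-\alpha)}{n}z^n$ (which belongs to $\mathcal{P}^{0}_{\mathcal{H}}(\alpha)$), equality holds in the right-hand inequality at $z=r$ and in the left-hand inequality at $z=-r$, for every $r\in[0,1)$.
   Context: $\mathbb{D}=\{z\in\mathbb{C}:|z|<1\}$. $\mathcal{H}_0$ denotes the class of harmonic functions $f=h+\overline{g}$ on $\mathbb{D}$, where $h,g$ are analytic in $\mathbb{D}$ of the form $h(z)=z+\sum_{n=2}^\infty a_nz^n$ and $g(z)=\sum_{n=2}^\infty b_nz^n$. For $0\le\alpha<1$, $\mathcal{P}^{0}_{\mathcal{H}}(\alpha)$ is the set of $f=h+\overline{g}\in\mathcal{H}_0$ such that $\operatorname{Re}(h'(z)-\alpha)>|g'(z)|$ for all $z\in\mathbb{D}$. *)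

theory Defs
  imports "HOL-Complex_Analysis.Complex_Analysis"
begin

text \<open>The class H_0: harmonic f = h + conj g on the unit disc with h, g analytic,
  h(z) = z + sum a_n z^n (n>=2), g(z) = sum b_n z^n (n>=2), i.e.
  h(0) = 0, h'(0) = 1, g(0) = 0, g'(0) = 0.\<close>
definition H0 :: "(complex \<Rightarrow> complex) \<Rightarrow> (complex \<Rightarrow> complex) \<Rightarrow> bool" where
  "H0 h g \<longleftrightarrow> h holomorphic_on ball 0 1 \<and> g holomorphic_on ball 0 1 \<and>
     h 0 = 0 \<and> deriv h 0 = 1 \<and> g 0 = 0 \<and> deriv g 0 = 0"

definition PH0 :: "real \<Rightarrow> (complex \<Rightarrow> complex) \<Rightarrow> (complex \<Rightarrow> complex) \<Rightarrow> bool" where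
  "PH0 \<alpha> h g \<longleftrightarrow> H0 h g \<and>
     (\<forall>z\<in>ball 0 1. Re (deriv h z - of_real \<alpha>) > norm (deriv g z))"

definition harm :: "(complex \<Rightarrow> complex) \<Rightarrow> (complex \<Rightarrow> complex) \<Rightarrow> complex \<Rightarrow> complex" where
  "harm h g z = h z + cnj (g z)"

definition f_ext :: "real \<Rightarrow> complex \<Rightarrow> complex" where
  "f_ext \<alpha> z = z + (\<Sum>n. of_real (2 * (1 - \<alpha>) / real (n + 2)) * z ^ (n + 2))"

end

theory Submission
  imports Defs
begin


lemma ser_plus:
  fixes r :: real assumes "\<bar>r\<bar> < 1"
  shows "(\<lambda>n. (-1) ^ (n + 1) * r ^ (n + 2) / real (n + 2)) sums (ln (1 + r) - r)"
proof -
  have "(\<lambda>n. - ((-r)^n) / of_nat n) sums ln (1 + r)" using ln_series'[OF assms] .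
  hence "(\<lambda>i. - ((-r)^(i+2)) / of_nat (i+2)) sums (ln (1 + r) - (\<Sum>i<2. - ((-r)^i) / of_nat i))"
    by (subst sums_iff_shift) simp
  moreover have "(\<lambda>i. - ((-r)^(i+2)) / of_nat (i+2)) = (\<lambda>n. (-1) ^ (n + 1) * r ^ (n + 2) / real (n + 2))"
    by (rule ext) (simp add: power_minus')
  moreover have "(\<Sum>i<2. - ((-r)^i) / of_nat i) = r" by (simp add: eval_nat_numeral)
  ultimately show ?thesis by simp
qed

lemma ser_minus:
  fixes r :: real assumes "\<bar>r\<bar> < 1"
  shows "(\<lambda>n. r ^ (n + 2) / real (n + 2)) sums (- ln (1 - r) - r)"
proof -
  have "(\<lambda>n. - ((r)^n) / of_nat n) sums ln (1 - r)" using ln_series'[of "-r"] assms by simp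
  hence "(\<lambda>i. - ((r)^(i+2)) / of_nat (i+2)) sums (ln (1 - r) - (\<Sum>i<2. - ((r)^i) / of_nat i))"
    by (subst sums_iff_shift) simp
  hence "(\<lambda>i. - (- ((r)^(i+2)) / of_nat (i+2))) sums (- (ln (1 - r) - (\<Sum>i<2. - ((r)^i) / of_nat i)))"
    by (rule sums_minus)
  moreover have "(\<Sum>i<2. - ((r)^i) / of_nat i) = -r" by (simp add: eval_nat_numeral)
  hence "- (ln (1 - r) - (\<Sum>i<2. - ((r)^i) / of_nat i)) = - ln (1 - r) - r" by simp
  moreover have "(\<lambda>i. - (- ((r)^(i+2)) / of_nat (i+2))) = (\<lambda>n. r ^ (n + 2) / real (n + 2))" by auto
  ultimately show ?thesis by metis
qed

lemma cser_minus:
  fixes z :: complex assumes "norm z < 1"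
  shows "(\<lambda>n. z ^ (n + 2) / of_nat (n + 2)) sums (- ln (1 - z) - z)"
proof -
  have "(\<lambda>n. - ((z)^n) / of_nat n) sums ln (1 - z)" using Ln_series'[of "-z"] assms by simp
  hence "(\<lambda>i. - ((z)^(i+2)) / of_nat (i+2)) sums (ln (1 - z) - (\<Sum>i<2. - ((z)^i) / of_nat i))"
    by (subst sums_iff_shift) simp
  hence "(\<lambda>i. - (- ((z)^(i+2)) / of_nat (i+2))) sums (- (ln (1 - z) - (\<Sum>i<2. - ((z)^i) / of_nat i)))"
    by (rule sums_minus)
  moreover have "(\<Sum>i<2. - ((z)^i) / of_nat i) = -z" by (simp add: eval_nat_numeral)
  hence "- (ln (1 - z) - (\<Sum>i<2. - ((z)^i) / of_nat i)) = - ln (1 - z) - z" by simp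
  moreover have "(\<lambda>i. - (- ((z)^(i+2)) / of_nat (i+2))) = (\<lambda>n. z ^ (n + 2) / of_nat (n + 2))" by auto
  ultimately show ?thesis by metis
qed



lemma re_bound_aux:
  fixes \<omega> :: complex and \<rho> :: real
  assumes "norm \<omega> \<le> \<rho>" "\<rho> < 1"
  shows "Re ((1 + \<omega>) / (1 - \<omega>)) \<ge> (1 - \<rho>) / (1 + \<rho>)"
    and "norm ((1 + \<omega>) / (1 - \<omega>)) \<le> (1 + \<rho>) / (1 - \<rho>)"
proof -
  define s where "s = norm \<omega>"
  define a where "a = Re \<omega>"
  define b where "b = Im \<omega>"
  have s0: "0 \<le> s" "s \<le> \<rho>" using assms by (auto simp: s_def)
  have s2: "a^2 + b^2 = s^2" unfolding s_def a_def b_def by (simp add: cmod_power2)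
  have ab: "\<bar>a\<bar> \<le> s" unfolding s_def a_def by (rule abs_Re_le_cmod)
  have e1: "(1 - a)^2 + b^2 = 1 - 2*a + s^2" using s2 by (simp add: power2_eq_square algebra_simps)
  have e2: "(1 + a) * (1 - a) + b * (- b) = 1 - s^2" using s2 by (simp add: power2_eq_square algebra_simps)
  have re: "Re ((1 + \<omega>) / (1 - \<omega>)) = (1 - s^2) / ((1 - a)^2 + b^2)"
    apply (simp only: Re_divide)
    apply (simp add: a_def[symmetric] b_def[symmetric] power2_eq_square)
    using e2 by (simp add: power2_eq_square)
  have d0: "0 < (1 - a)^2 + b^2"
  proof -
    have "0 < (1 - s)^2" using s0 assms by simp
    moreover have "(1 - s)\<^sup>2 = 1 - 2 * s + s\<^sup>2" by (simp add: power2_diff)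
    ultimately show ?thesis unfolding e1 using ab by linarith
  qed
  have d1: "(1 - a)^2 + b^2 \<le> (1 + s)^2"
    unfolding e1 using ab by (simp add: power2_eq_square algebra_simps)
  have ns: "0 \<le> 1 - s^2" using s0 assms by (simp add: power2_eq_square mult_le_one)
  have "(1 - s^2) / (1 + s)^2 = ((1 - s) * (1 + s)) / ((1 + s) * (1 + s))"
    by (simp add: power2_eq_square algebra_simps)
  also have "\<dots> = (1 - s) / (1 + s)" using s0 by simp
  finally have "(1 - s) / (1 + s) = (1 - s^2) / (1 + s)^2" by simp
  also have "\<dots> \<le> (1 - s^2) / ((1 - a)^2 + b^2)"
    using d0 d1 ns by (intro divide_left_mono) (auto intro!: mult_pos_pos)
  finally have "(1 - s) / (1 + s) \<le> Re ((1 + \<omega>) / (1 - \<omega>))" using re by simp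
  moreover have "(1 - \<rho>) / (1 + \<rho>) \<le> (1 - s) / (1 + s)"
    using s0 assms by (simp add: field_simps)
  ultimately show "Re ((1 + \<omega>) / (1 - \<omega>)) \<ge> (1 - \<rho>) / (1 + \<rho>)" by linarith
  have n1: "norm (1 + \<omega>) \<le> 1 + s" unfolding s_def using norm_triangle_ineq[of 1 \<omega>] by simp
  have n2: "1 - s \<le> norm (1 - \<omega>)" unfolding s_def using norm_triangle_ineq2[of 1 \<omega>] by simp
  have "norm ((1 + \<omega>) / (1 - \<omega>)) = norm (1 + \<omega>) / norm (1 - \<omega>)" by (simp add: norm_divide)
  also have "\<dots> \<le> (1 + s) / (1 - s)"
    using n1 n2 s0 assms by (intro frac_le) auto
  also have "\<dots> \<le> (1 + \<rho>) / (1 - \<rho>)" using s0 assms by (simp add: field_simps)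
  finally show "norm ((1 + \<omega>) / (1 - \<omega>)) \<le> (1 + \<rho>) / (1 - \<rho>)" .
qed



lemma carath:
  assumes hol: "p holomorphic_on ball 0 1" and p0: "p 0 = 1"
    and pos: "\<And>w. w \<in> ball 0 1 \<Longrightarrow> Re (p w) > 0" and w: "norm w < 1"
  shows "Re (p w) \<ge> (1 - norm w) / (1 + norm w)"
    and "norm (p w) \<le> (1 + norm w) / (1 - norm w)"
proof -
  define \<omega> where "\<omega> = (\<lambda>w. (p w - 1) / (p w + 1))"
  have nz: "p w + 1 \<noteq> 0" if "w \<in> ball 0 1" for w
    using pos[OF that] by (metis add.commute add_cancel_right_left less_irrefl one_complex.simps(1)
        plus_complex.simps(1) zero_complex.simps(1) add_pos_pos zero_less_one)
  have holo: "\<omega> holomorphic_on ball 0 1"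
    unfolding \<omega>_def using nz by (intro holomorphic_intros hol) auto
  have o0: "\<omega> 0 = 0" by (simp add: \<omega>_def p0)
  have lt: "norm (\<omega> w) < 1" if "norm w < 1" for w
  proof -
    have wb: "w \<in> ball 0 1" using that by simp
    have "norm (p w - 1) < norm (p w + 1)"
      using pos[OF wb] unfolding cmod_def by (auto intro!: real_sqrt_less_mono simp: power2_eq_square algebra_simps)
    thus ?thesis using nz[OF wb] by (simp add: \<omega>_def norm_divide divide_less_eq)
  qed
  have sw: "norm (\<omega> w) \<le> norm w" using Schwarz_Lemma(1)[OF holo o0 lt w] .
  have pw: "p w = (1 + \<omega> w) / (1 - \<omega> w)"
  proof -
    have n: "p w + 1 \<noteq> 0" using nz w by simp
    have a: "1 + \<omega> w = 2 * p w / (p w + 1)" using n unfolding \<omega>_def by (simp add: field_simps)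
    have b: "1 - \<omega> w = 2 / (p w + 1)" using n unfolding \<omega>_def by (simp add: field_simps)
    have c: "2 / (p w + 1) \<noteq> 0" using n by simp
    have "p w * (2 / (p w + 1)) = 2 * p w / (p w + 1)" by simp
    thus ?thesis unfolding a b using c by (simp add: nonzero_eq_divide_eq)
  qed
  show "Re (p w) \<ge> (1 - norm w) / (1 + norm w)"
    using re_bound_aux(1)[OF sw w] pw by simp
  show "norm (p w) \<le> (1 + norm w) / (1 - norm w)"
    using re_bound_aux(2)[OF sw w] pw by simp
qed



lemma eps_bounds:
  assumes a0: "0 \<le> \<alpha>" and a1: "\<alpha> < 1" and P: "PH0 \<alpha> h g" and w: "norm w < 1"
    and e: "norm \<epsilon> \<le> 1"
  shows "Re (deriv h w + \<epsilon> * deriv g w) - \<alpha> \<ge> (1 - \<alpha>) * ((1 - norm w) / (1 + norm w))"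
    and "norm (deriv h w + \<epsilon> * deriv g w - of_real \<alpha>) \<le> (1 - \<alpha>) * ((1 + norm w) / (1 - norm w))"
proof -
  have hh: "h holomorphic_on ball 0 1" and gh: "g holomorphic_on ball 0 1"
    and d0: "deriv h 0 = 1" "deriv g 0 = 0"
    and pos: "\<And>z. z \<in> ball 0 1 \<Longrightarrow> Re (deriv h z - of_real \<alpha>) > norm (deriv g z)"
    using P by (auto simp: PH0_def H0_def)
  define p where "p = (\<lambda>z. (deriv h z + \<epsilon> * deriv g z - of_real \<alpha>) / of_real (1 - \<alpha>))"
  have hol: "p holomorphic_on ball 0 1"
    unfolding p_def using a1
    by (intro holomorphic_intros holomorphic_deriv hh gh) auto
  have p0: "p 0 = 1" using a1 by (simp add: p_def d0)
  have ppos: "Re (p z) > 0" if "z \<in> ball 0 1" for z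
  proof -
    have "- Re (\<epsilon> * deriv g z) \<le> norm (\<epsilon> * deriv g z)"
      using abs_Re_le_cmod[of "\<epsilon> * deriv g z"] by linarith
    also have "\<dots> \<le> norm (deriv g z)" using e by (simp add: norm_mult mult_left_le_one_le)
    finally have "0 < Re (deriv h z + \<epsilon> * deriv g z - of_real \<alpha>)"
      using pos[OF that] by simp
    thus ?thesis using a1 by (simp add: p_def)
  qed
  note C = carath[OF hol p0 ppos w]
  have "Re (p w) = (Re (deriv h w + \<epsilon> * deriv g w) - \<alpha>) / (1 - \<alpha>)"
    by (simp add: p_def)
  with C(1) a1 show "Re (deriv h w + \<epsilon> * deriv g w) - \<alpha> \<ge> (1 - \<alpha>) * ((1 - norm w) / (1 + norm w))"
    by (simp add: pos_le_divide_eq mult.commute)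
  have "cmod (1 - complex_of_real \<alpha>) = 1 - \<alpha>"
    using a1 by (metis abs_of_pos diff_gt_0_iff_gt norm_of_real of_real_1 of_real_diff)
  hence "norm (p w) = norm (deriv h w + \<epsilon> * deriv g w - of_real \<alpha>) / (1 - \<alpha>)"
    using a1 by (simp add: p_def norm_divide)
  with C(2) a1 show "norm (deriv h w + \<epsilon> * deriv g w - of_real \<alpha>) \<le> (1 - \<alpha>) * ((1 + norm w) / (1 - norm w))"
    by (simp add: divide_le_eq mult.commute)
qed

lemma dbounds:
  assumes a0: "0 \<le> \<alpha>" and a1: "\<alpha> < 1" and P: "PH0 \<alpha> h g" and w: "norm w < 1"
  shows "Re (deriv h w) - norm (deriv g w) \<ge> \<alpha> + (1 - \<alpha>) * ((1 - norm w) / (1 + norm w))"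
    and "norm (deriv h w) + norm (deriv g w) \<le> \<alpha> + (1 - \<alpha>) * ((1 + norm w) / (1 - norm w))"
proof -
  define G where "G = deriv g w"
  define H where "H = deriv h w"
  define e1 where "e1 = - cnj G / of_real (norm G)"
  have ne1: "norm e1 \<le> 1" by (simp add: e1_def norm_divide divide_le_eq_1)
  have "e1 * G = - of_real (norm G)"
  proof (cases "G = 0")
    case False
    have "cnj G * G = of_real ((norm G)^2)" by (metis complex_norm_square mult.commute of_real_power)
    thus ?thesis using False by (simp add: e1_def power2_eq_square field_simps)
  qed (simp add: e1_def)
  hence "Re (H + e1 * G) = Re H - norm G" by simp
  with eps_bounds(1)[OF a0 a1 P w ne1] show "Re (deriv h w) - norm (deriv g w) \<ge> \<alpha> + (1 - \<alpha>) * ((1 - norm w) / (1 + norm w))"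
    unfolding G_def H_def by simp
  have Hnz: "H \<noteq> 0"
  proof
    assume "H = 0"
    from P w have "Re (H - of_real \<alpha>) > norm G" unfolding PH0_def G_def H_def by auto
    with \<open>H = 0\<close> have "Re (0 - of_real \<alpha>) > norm G" by simp
    thus False using a0 norm_ge_zero[of G] by simp
  qed
  define e2 where "e2 = (H / of_real (norm H)) * (cnj G / of_real (norm G))"
  have ne2: "norm e2 \<le> 1" using Hnz by (simp add: e2_def norm_mult norm_divide divide_le_eq_1)
  have "e2 * G = H / of_real (norm H) * of_real (norm G)"
  proof (cases "G = 0")
    case False
    have "cnj G * G = of_real ((norm G)^2)" by (metis complex_norm_square mult.commute of_real_power)
    hence "cnj G / of_real (norm G) * G = of_real (norm G)" using False
      by (simp add: power2_eq_square)
    moreover have "e2 * G = H / of_real (norm H) * (cnj G / of_real (norm G) * G)"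
      by (simp add: e2_def mult.assoc)
    ultimately show ?thesis by simp
  qed (simp add: e2_def)
  hence "H + e2 * G = H * of_real (1 + norm G / norm H)"
    using Hnz by (simp add: field_simps)
  hence "norm (H + e2 * G) = norm H * \<bar>1 + norm G / norm H\<bar>"
    by (simp only: norm_mult norm_of_real)
  hence "norm (H + e2 * G) = norm H * (1 + norm G / norm H)"
    by simp
  hence nn: "norm (H + e2 * G) = norm H + norm G"
    using Hnz by (simp add: distrib_left)
  have "norm (H + e2 * G) \<le> norm (H + e2 * G - of_real \<alpha>) + \<alpha>"
    using norm_triangle_ineq[of "H + e2 * G - of_real \<alpha>" "of_real \<alpha>"] a0 by simp
  with eps_bounds(2)[OF a0 a1 P w ne2] nn
  show "norm (deriv h w) + norm (deriv g w) \<le> \<alpha> + (1 - \<alpha>) * ((1 + norm w) / (1 - norm w))"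
    unfolding G_def H_def by simp
qed



lemma harm_deriv:
  assumes P: "PH0 \<alpha> h g" and u: "norm u = 1" and t: "\<bar>t\<bar> < 1"
  shows "((\<lambda>t. Re (c * harm h g (of_real t * u))) has_real_derivative
            Re (c * (u * deriv h (of_real t * u) + cnj (u * deriv g (of_real t * u))))) (at t)"
proof -
  have hh: "h holomorphic_on ball 0 1" and gh: "g holomorphic_on ball 0 1"
    using P by (auto simp: PH0_def H0_def)
  have inb: "of_real t * u \<in> ball 0 1" using u t by (simp add: norm_mult)
  have lin: "((\<lambda>t. of_real t * u) has_vector_derivative u) (at t)"
    by (rule derivative_eq_intros refl | simp)+
  have dh: "(h has_field_derivative deriv h (of_real t * u)) (at (of_real t * u))"
    by (rule holomorphic_derivI[OF hh open_ball inb])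
  have dg: "(g has_field_derivative deriv g (of_real t * u)) (at (of_real t * u))"
    by (rule holomorphic_derivI[OF gh open_ball inb])
  have Dh: "((\<lambda>t. h (of_real t * u)) has_vector_derivative (u * deriv h (of_real t * u))) (at t)"
    using field_vector_diff_chain_at[OF lin dh] by (simp add: o_def)
  have Dg: "((\<lambda>t. g (of_real t * u)) has_vector_derivative (u * deriv g (of_real t * u))) (at t)"
    using field_vector_diff_chain_at[OF lin dg] by (simp add: o_def)
  have "((\<lambda>t. c * harm h g (of_real t * u)) has_vector_derivative
          c * (u * deriv h (of_real t * u) + cnj (u * deriv g (of_real t * u)))) (at t)"
    unfolding harm_def
    by (intro has_vector_derivative_mult_right has_vector_derivative_add Dh has_vector_derivative_cnj Dg)
  from has_field_derivative_Re[OF this] show ?thesis .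
qed

lemma L_deriv:
  assumes "t > -1"
  shows "((\<lambda>t. (2*\<alpha>-1)*t + 2*(1-\<alpha>)*ln(1+t)) has_real_derivative ((2*\<alpha>-1) + 2*(1-\<alpha>)/(1+t))) (at t)"
proof -
  have "((\<lambda>t. (2*\<alpha>-1)*t + 2*(1-\<alpha>)*ln(1+t)) has_real_derivative ((2*\<alpha>-1) * 1 + 2*(1-\<alpha>)*((0 + 1) / (1+t)))) (at t)"
  proof -
    have l: "((\<lambda>t. ln (1+t)) has_real_derivative (0 + 1) / (1+t)) (at t)"
      using assms by (auto intro!: derivative_eq_intros simp: field_simps)
    show ?thesis by (intro DERIV_add DERIV_diff DERIV_cmult DERIV_ident l)
  qed
  thus ?thesis by simp
qed

lemma U_deriv:
  assumes "t < 1"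
  shows "((\<lambda>t. (2*\<alpha>-1)*t - 2*(1-\<alpha>)*ln(1-t)) has_real_derivative ((2*\<alpha>-1) + 2*(1-\<alpha>)/(1-t))) (at t)"
proof -
  have "((\<lambda>t. (2*\<alpha>-1)*t - 2*(1-\<alpha>)*ln(1-t)) has_real_derivative ((2*\<alpha>-1) * 1 - 2*(1-\<alpha>)*((0 - 1) / (1-t)))) (at t)"
  proof -
    have l: "((\<lambda>t. ln (1-t)) has_real_derivative (0 - 1) / (1-t)) (at t)"
      using assms by (auto intro!: derivative_eq_intros simp: field_simps)
    show ?thesis by (intro DERIV_add DERIV_diff DERIV_cmult DERIV_ident l)
  qed
  thus ?thesis by simp
qed



lemma growth:
  assumes a0: "0 \<le> \<alpha>" and a1: "\<alpha> < 1" and P: "PH0 \<alpha> h g" and z: "norm z < 1"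
  shows "(2*\<alpha>-1)*norm z + 2*(1-\<alpha>)*ln(1+norm z) \<le> norm (harm h g z)"
    and "norm (harm h g z) \<le> (2*\<alpha>-1)*norm z - 2*(1-\<alpha>)*ln(1-norm z)"
proof -
  have h0: "h 0 = 0" and g0: "g 0 = 0" using P by (auto simp: PH0_def H0_def)
  define r where "r = norm z"
  have r0: "0 \<le> r" "r < 1" using z by (auto simp: r_def)
  define L where "L = (\<lambda>t::real. (2*\<alpha>-1)*t + 2*(1-\<alpha>)*ln(1+t))"
  define U where "U = (\<lambda>t::real. (2*\<alpha>-1)*t - 2*(1-\<alpha>)*ln(1-t))"
  have Lid: "\<alpha> + (1 - \<alpha>) * ((1 - t) / (1 + t)) = (2*\<alpha>-1) + 2*(1-\<alpha>)/(1+t)" if "0 \<le> t" for t :: real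
    using that by (simp add: field_simps)
  have Uid: "\<alpha> + (1 - \<alpha>) * ((1 + t) / (1 - t)) = (2*\<alpha>-1) + 2*(1-\<alpha>)/(1-t)" if "t < 1" for t :: real
    using that by (simp add: field_simps)
  show "(2*\<alpha>-1)*norm z + 2*(1-\<alpha>)*ln(1+norm z) \<le> norm (harm h g z)"
  proof (cases "z = 0")
    case True thus ?thesis by (simp add: harm_def h0 g0)
  next
    case False
    define u where "u = z / of_real r"
    have rp: "r > 0" using False by (simp add: r_def)
    have u1: "norm u = 1" using rp by (simp add: u_def norm_divide r_def)
    have cu: "cnj u * u = 1" using u1 by (metis complex_norm_square mult.commute of_real_1 power_one)
    have zu: "of_real r * u = z" using rp by (simp add: u_def)
    define G where "G = (\<lambda>t. Re (cnj u * harm h g (of_real t * u)))"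
    have "G 0 - L 0 \<le> G r - L r"
    proof (rule DERIV_nonneg_imp_nondecreasing[OF r0(1)])
      fix x assume x: "0 \<le> x" "x \<le> r"
      hence xa: "\<bar>x\<bar> < 1" using r0 by simp
      have nx: "norm (of_real x * u) = x" using x u1 by (simp add: norm_mult)
      have D: "((\<lambda>t. G t - L t) has_real_derivative
          Re (cnj u * (u * deriv h (of_real x * u) + cnj (u * deriv g (of_real x * u)))) - ((2*\<alpha>-1) + 2*(1-\<alpha>)/(1+x))) (at x)"
        unfolding G_def L_def using x
        by (intro DERIV_diff harm_deriv[OF P u1 xa] L_deriv) auto
      have db: "Re (deriv h (of_real x * u)) - norm (deriv g (of_real x * u)) \<ge> (2*\<alpha>-1) + 2*(1-\<alpha>)/(1+x)"
      proof -
        have "norm (of_real x * u) < 1" using nx xa by simp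
        from dbounds(1)[OF a0 a1 P this] show ?thesis unfolding nx Lid[OF x(1)] .
      qed
      have e: "Re (cnj u * (u * deriv h (of_real x * u) + cnj (u * deriv g (of_real x * u))))
             = Re (deriv h (of_real x * u)) + Re (cnj u * cnj u * cnj (deriv g (of_real x * u)))"
      proof -
        have "cnj u * (u * deriv h (of_real x * u) + cnj (u * deriv g (of_real x * u)))
            = (cnj u * u) * deriv h (of_real x * u) + cnj u * cnj u * cnj (deriv g (of_real x * u))"
          by (simp only: complex_cnj_mult) (simp add: algebra_simps)
        thus ?thesis unfolding cu by simp
      qed
      have "- Re (cnj u * cnj u * cnj (deriv g (of_real x * u))) \<le> norm (cnj u * cnj u * cnj (deriv g (of_real x * u)))"
        using abs_Re_le_cmod[of "cnj u * cnj u * cnj (deriv g (of_real x * u))"] by linarith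
      also have "\<dots> = norm (deriv g (of_real x * u))" using u1 by (simp add: norm_mult)
      finally show "\<exists>y. ((\<lambda>t. G t - L t) has_real_derivative y) (at x) \<and> 0 \<le> y"
        using D db e by (intro exI[of _ "Re (cnj u * (u * deriv h (of_real x * u) + cnj (u * deriv g (of_real x * u)))) - ((2*\<alpha>-1) + 2*(1-\<alpha>)/(1+x))"]) auto
    qed
    moreover have "G 0 = 0" by (simp add: G_def harm_def h0 g0)
    moreover have "L 0 = 0" by (simp add: L_def)
    moreover have "G r \<le> norm (harm h g z)"
    proof -
      have "G r = Re (cnj u * harm h g z)" using zu by (simp add: G_def)
      also have "\<dots> \<le> norm (cnj u * harm h g z)" by (rule complex_Re_le_cmod)
      also have "\<dots> = norm (harm h g z)" using u1 by (simp add: norm_mult)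
      finally show ?thesis .
    qed
    ultimately show ?thesis by (simp add: L_def r_def)
  qed
  show "norm (harm h g z) \<le> (2*\<alpha>-1)*norm z - 2*(1-\<alpha>)*ln(1-norm z)"
  proof (cases "harm h g z = 0")
    case True
    have "ln (1 - r) \<le> (1 - r) - 1" using r0 by (intro ln_le_minus_one) auto
    hence A: "2*(1-\<alpha>)*ln(1-r) \<le> 2*(1-\<alpha>)*(-r)" using a1 by (intro mult_left_mono) auto
    have B: "(2*\<alpha>-1)*r + 2*(1-\<alpha>)*r = r" by (simp add: algebra_simps)
    have C: "2*(1-\<alpha>)*(-r) = -(2*(1-\<alpha>)*r)" by simp
    have "0 \<le> U r" unfolding U_def using A B C r0 by linarith
    thus ?thesis using True by (simp add: U_def r_def)
  next
    case False
    hence zn: "z \<noteq> 0" by (auto simp: harm_def h0 g0)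
    define u where "u = z / of_real r"
    have rp: "r > 0" using zn by (simp add: r_def)
    have u1: "norm u = 1" using rp by (simp add: u_def norm_divide r_def)
    have zu: "of_real r * u = z" using rp by (simp add: u_def)
    define c where "c = cnj (harm h g z) / of_real (norm (harm h g z))"
    have c1: "norm c = 1" using False by (simp add: c_def norm_divide)
    define G where "G = (\<lambda>t. Re (c * harm h g (of_real t * u)))"
    have "U 0 - G 0 \<le> U r - G r"
    proof (rule DERIV_nonneg_imp_nondecreasing[OF r0(1)])
      fix x assume x: "0 \<le> x" "x \<le> r"
      hence xa: "\<bar>x\<bar> < 1" using r0 by simp
      have x1: "x < 1" using xa by simp
      have nx: "norm (of_real x * u) = x" using x u1 by (simp add: norm_mult)
      have D: "((\<lambda>t. U t - G t) has_real_derivative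
          ((2*\<alpha>-1) + 2*(1-\<alpha>)/(1-x)) - Re (c * (u * deriv h (of_real x * u) + cnj (u * deriv g (of_real x * u))))) (at x)"
        unfolding G_def U_def using x1
        by (intro DERIV_diff harm_deriv[OF P u1 xa] U_deriv) auto
      have db: "norm (deriv h (of_real x * u)) + norm (deriv g (of_real x * u)) \<le> (2*\<alpha>-1) + 2*(1-\<alpha>)/(1-x)"
      proof -
        have "norm (of_real x * u) < 1" using nx xa by simp
        from dbounds(2)[OF a0 a1 P this] show ?thesis unfolding nx Uid[OF x1] .
      qed
      have "Re (c * (u * deriv h (of_real x * u) + cnj (u * deriv g (of_real x * u))))
           \<le> norm (c * (u * deriv h (of_real x * u) + cnj (u * deriv g (of_real x * u))))"
        by (rule complex_Re_le_cmod)
      also have "\<dots> = norm (u * deriv h (of_real x * u) + cnj (u * deriv g (of_real x * u)))"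
        using c1 by (simp add: norm_mult)
      also have "\<dots> \<le> norm (u * deriv h (of_real x * u)) + norm (cnj (u * deriv g (of_real x * u)))"
        by (rule norm_triangle_ineq)
      also have "\<dots> = norm (deriv h (of_real x * u)) + norm (deriv g (of_real x * u))"
        using u1 by (simp add: norm_mult)
      finally show "\<exists>y. ((\<lambda>t. U t - G t) has_real_derivative y) (at x) \<and> 0 \<le> y"
        using D db by (intro exI[of _ "((2*\<alpha>-1) + 2*(1-\<alpha>)/(1-x)) - Re (c * (u * deriv h (of_real x * u) + cnj (u * deriv g (of_real x * u))))"]) auto
    qed
    moreover have "G 0 = 0" by (simp add: G_def harm_def h0 g0)
    moreover have "U 0 = 0" by (simp add: U_def)
    moreover have "G r = norm (harm h g z)"
    proof -
      have "G r = Re (c * harm h g z)" using zu by (simp add: G_def)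
      also have "c * harm h g z = of_real (norm (harm h g z))"
        using False by (simp add: c_def complex_norm_square[symmetric] power2_eq_square field_simps)
      finally show ?thesis by simp
    qed
    ultimately show ?thesis by (simp add: U_def r_def)
  qed
qed



lemma f_ext_eq:
  assumes "norm z < 1"
  shows "f_ext \<alpha> z = z + of_real (2*(1-\<alpha>)) * (- Ln (1 - z) - z)"
proof -
  have "(\<lambda>n. of_real (2*(1-\<alpha>)) * (z ^ (n + 2) / of_nat (n + 2))) sums (of_real (2*(1-\<alpha>)) * (- Ln (1 - z) - z))"
    by (rule sums_mult[OF cser_minus[OF assms]])
  moreover have "(\<lambda>n. of_real (2*(1-\<alpha>)) * (z ^ (n + 2) / of_nat (n + 2))) = (\<lambda>n. of_real (2 * (1 - \<alpha>) / real (n + 2)) * z ^ (n + 2))"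
    by (rule ext) (simp add: field_simps)
  ultimately show ?thesis unfolding f_ext_def by (simp add: sums_iff)
qed

lemma Re_pos_notin: "Re w > 0 \<Longrightarrow> w \<notin> \<real>\<^sub>\<le>\<^sub>0"
  by (auto simp: complex_nonpos_Reals_iff)

lemma f_ext_deriv:
  assumes "norm z < 1"
  shows "(f_ext \<alpha> has_field_derivative (1 + of_real (2*(1-\<alpha>)) * (1 / (1 - z) - 1))) (at z)"
proof -
  have re: "Re (1 - z) > 0" using assms abs_Re_le_cmod[of z] by simp
  have dl: "(Ln has_field_derivative inverse (1 - z)) (at (1 - z))"
    by (rule has_field_derivative_Ln[OF Re_pos_notin[OF re]])
  have "((\<lambda>z. z + of_real (2*(1-\<alpha>)) * (- Ln (1 - z) - z)) has_field_derivative
          (1 + of_real (2*(1-\<alpha>)) * (1 / (1 - z) - 1))) (at z)"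
  proof -
    have dl2: "((\<lambda>z. Ln (1 - z)) has_field_derivative inverse (1 - z) * (0 - 1)) (at z)"
      by (rule DERIV_chain2[where g="\<lambda>z. 1 - z", OF dl]) (intro DERIV_diff DERIV_const DERIV_ident)
    have "((\<lambda>z. z + of_real (2*(1-\<alpha>)) * (- Ln (1 - z) - z)) has_field_derivative
          (1 + of_real (2*(1-\<alpha>)) * (- (inverse (1 - z) * (0 - 1)) - 1))) (at z)"
      by (intro DERIV_add DERIV_ident DERIV_cmult DERIV_diff DERIV_minus dl2)
    thus ?thesis by (simp add: divide_inverse)
  qed
  thus ?thesis
    by (rule has_field_derivative_transform_within_open[where S = "ball 0 1"])
       (use assms f_ext_eq in auto)
qed

lemma Re_inv_gt:
  assumes "norm z < 1"
  shows "Re (1 / (1 - z)) > 1/2"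
proof -
  define a where "a = Re z"
  define b where "b = Im z"
  have ab: "a^2 + b^2 < 1" using assms unfolding a_def b_def
    by (metis cmod_power2 less_1_mult norm_ge_zero power2_eq_square power_strict_mono zero_less_numeral power_one)
  have a1: "a < 1" using assms abs_Re_le_cmod[of z] unfolding a_def by linarith
  have e: "Re (1 / (1 - z)) = (1 - a) / ((1 - a)^2 + b^2)"
    by (simp add: Re_divide a_def b_def power2_eq_square)
  have dpos: "(1 - a)^2 + b^2 > 0" using a1 by (simp add: add_pos_nonneg)
  have "(1 - a)^2 + b^2 < 2 * (1 - a)" using ab by (simp add: power2_eq_square algebra_simps)
  thus ?thesis unfolding e using dpos by (simp add: field_simps)
qed

lemma f_ext_PH0:
  assumes a0: "0 \<le> \<alpha>" and a1: "\<alpha> < 1"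
  shows "PH0 \<alpha> (f_ext \<alpha>) (\<lambda>_. 0)"
proof -
  have dd: "deriv (f_ext \<alpha>) z = 1 + of_real (2*(1-\<alpha>)) * (1 / (1 - z) - 1)" if "norm z < 1" for z
    using DERIV_imp_deriv[OF f_ext_deriv[OF that]] .
  have hol: "f_ext \<alpha> holomorphic_on ball 0 1"
    using f_ext_deriv[of _ \<alpha>] by (fastforce simp: holomorphic_on_open)
  have "f_ext \<alpha> 0 = 0" by (simp add: f_ext_def)
  moreover have "deriv (f_ext \<alpha>) 0 = 1" using dd[of 0] by simp
  moreover have "Re (deriv (f_ext \<alpha>) z - of_real \<alpha>) > 0" if "z \<in> ball 0 1" for z
  proof -
    have z: "norm z < 1" using that by simp
    have "Re (deriv (f_ext \<alpha>) z - of_real \<alpha>) = (1 - \<alpha>) * (2 * Re (1 / (1 - z)) - 1)"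
    proof -
      have g: "\<And>q. Re (1 + of_real (2*(1-\<alpha>)) * (q - 1) - of_real \<alpha>) = (1-\<alpha>)*(2*Re q - 1)"
        by (simp add: algebra_simps)
      show ?thesis unfolding dd[OF z] by (rule g)
    qed
    moreover have "2 * Re (1 / (1 - z)) - 1 > 0" using Re_inv_gt[OF z] by simp
    ultimately show ?thesis using a1 by simp
  qed
  ultimately show ?thesis using hol by (simp add: PH0_def H0_def)
qed



lemma SU: assumes "\<bar>r\<bar> < 1"
  shows "(\<lambda>n. 2 * (1 - \<alpha>) / real (n + 2) * r ^ (n + 2)) sums (2*(1-\<alpha>)*(- ln (1 - r) - r))"
proof -
  have "(\<lambda>n. 2*(1-\<alpha>) * (r ^ (n + 2) / real (n + 2))) sums (2*(1-\<alpha>)*(- ln (1 - r) - r))"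
    by (rule sums_mult[OF ser_minus[OF assms]])
  thus ?thesis by (simp add: field_simps)
qed

lemma SL: assumes "\<bar>r\<bar> < 1"
  shows "(\<lambda>n. 2 * (1 - \<alpha>) * (-1) ^ (n + 1) / real (n + 2) * r ^ (n + 2)) sums (2*(1-\<alpha>)*(ln (1 + r) - r))"
proof -
  have "(\<lambda>n. 2*(1-\<alpha>) * ((-1) ^ (n + 1) * r ^ (n + 2) / real (n + 2))) sums (2*(1-\<alpha>)*(ln (1 + r) - r))"
    by (rule sums_mult[OF ser_plus[OF assms]])
  moreover have "(\<lambda>n. 2*(1-\<alpha>) * ((-1) ^ (n + 1) * r ^ (n + 2) / real (n + 2))) =
      (\<lambda>n. 2 * (1 - \<alpha>) * (-1) ^ (n + 1) / real (n + 2) * r ^ (n + 2))"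
    by (rule ext) (simp add: field_simps)
  ultimately show ?thesis by simp
qed

lemma L_nonneg:
  fixes r :: real
  assumes a0: "0 \<le> \<alpha>" and a1: "\<alpha> < 1" and r: "0 \<le> r" "r < 1"
  shows "0 \<le> r + 2*(1-\<alpha>)*(ln (1 + r) - r)"
proof -
  have "ln (1 / (1 + r)) \<le> 1 / (1 + r) - 1" using r by (intro ln_le_minus_one) auto
  moreover have "ln (1 / (1 + r)) = - ln (1 + r)" using r by (simp add: ln_div)
  ultimately have l1: "ln (1 + r) \<ge> 1 - 1 / (1 + r)" by simp
  have "r * r \<le> r" using r by (simp add: mult_le_one mult_left_le_one_le)
  hence "1 - 1 / (1 + r) \<ge> r / 2" using r by (simp add: field_simps)
  with l1 have "ln (1 + r) - r \<ge> - r / 2" by simp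
  hence "2*(1-\<alpha>)*(ln (1 + r) - r) \<ge> 2*(1-\<alpha>)*(- r / 2)" using a1 by (intro mult_left_mono) auto
  moreover have "r + 2*(1-\<alpha>)*(- r / 2) = \<alpha> * r" by (simp add: algebra_simps)
  moreover have "\<alpha> * r \<ge> 0" using a0 r by simp
  ultimately show ?thesis by linarith
qed

lemma U_nonneg:
  fixes r :: real
  assumes r: "0 \<le> r" "r < 1"
  shows "0 \<le> - ln (1 - r) - r"
proof -
  have "ln (1 - r) \<le> (1 - r) - 1" using r by (intro ln_le_minus_one) auto
  thus ?thesis by simp
qed



theorem theorem2p1:
  fixes \<alpha> :: real and h g :: "complex \<Rightarrow> complex"
  assumes "0 \<le> \<alpha>" and "\<alpha> < 1" and "PH0 \<alpha> h g"
  shows "(\<forall>z\<in>ball 0 1.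
           norm z + (\<Sum>n. 2 * (1 - \<alpha>) * (-1) ^ (n + 1) / real (n + 2) * norm z ^ (n + 2))
             \<le> norm (harm h g z) \<and>
           norm (harm h g z)
             \<le> norm z + (\<Sum>n. 2 * (1 - \<alpha>) / real (n + 2) * norm z ^ (n + 2))) \<and>
         PH0 \<alpha> (f_ext \<alpha>) (\<lambda>_. 0) \<and>
         (\<forall>r::real. 0 \<le> r \<and> r < 1 \<longrightarrow>
           norm (harm (f_ext \<alpha>) (\<lambda>_. 0) (of_real r))
             = r + (\<Sum>n. 2 * (1 - \<alpha>) / real (n + 2) * r ^ (n + 2)) \<and>
           norm (harm (f_ext \<alpha>) (\<lambda>_. 0) (- of_real r))
             = r + (\<Sum>n. 2 * (1 - \<alpha>) * (-1) ^ (n + 1) / real (n + 2) * r ^ (n + 2)))"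
proof (intro conjI ballI allI impI)
  fix z :: complex assume "z \<in> ball 0 1"
  hence z: "norm z < 1" by simp
  have az: "\<bar>norm z\<bar> < 1" using z by simp
  note G = growth[OF assms z]
  have "norm z + (\<Sum>n. 2 * (1 - \<alpha>) * (-1) ^ (n + 1) / real (n + 2) * norm z ^ (n + 2))
      = norm z + 2*(1-\<alpha>)*(ln (1 + norm z) - norm z)" using SL[OF az] by (simp add: sums_iff)
  also have "\<dots> = (2*\<alpha>-1)*norm z + 2*(1-\<alpha>)*ln(1+norm z)" by (simp add: algebra_simps)
  finally show "norm z + (\<Sum>n. 2 * (1 - \<alpha>) * (-1) ^ (n + 1) / real (n + 2) * norm z ^ (n + 2))
             \<le> norm (harm h g z)" using G(1) by simp
  have "norm z + (\<Sum>n. 2 * (1 - \<alpha>) / real (n + 2) * norm z ^ (n + 2))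
      = norm z + 2*(1-\<alpha>)*(- ln (1 - norm z) - norm z)" using SU[OF az] by (simp add: sums_iff)
  also have "\<dots> = (2*\<alpha>-1)*norm z - 2*(1-\<alpha>)*ln(1-norm z)" by (simp add: algebra_simps)
  finally show "norm (harm h g z) \<le> norm z + (\<Sum>n. 2 * (1 - \<alpha>) / real (n + 2) * norm z ^ (n + 2))"
    using G(2) by simp
next
  show "PH0 \<alpha> (f_ext \<alpha>) (\<lambda>_. 0)" by (rule f_ext_PH0[OF assms(1,2)])
next
  fix r :: real assume r: "0 \<le> r \<and> r < 1"
  have ar: "\<bar>r\<bar> < 1" using r by simp
  have n1: "norm (of_real r :: complex) < 1" using ar by simp
  have n2: "norm (- of_real r :: complex) < 1" using ar by simp
  have "f_ext \<alpha> (of_real r) = of_real r + of_real (2*(1-\<alpha>)) * (- Ln (1 - of_real r) - of_real r)"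
    by (rule f_ext_eq[OF n1])
  also have "Ln (1 - of_real r) = of_real (ln (1 - r))"
    using r by (metis Ln_of_real diff_gt_0_iff_gt of_real_1 of_real_diff)
  finally have "f_ext \<alpha> (of_real r) = of_real (r + 2*(1-\<alpha>)*(- ln (1 - r) - r))" by simp
  hence "norm (harm (f_ext \<alpha>) (\<lambda>_. 0) (of_real r)) = \<bar>r + 2*(1-\<alpha>)*(- ln (1 - r) - r)\<bar>"
    by (simp add: harm_def del: of_real_add of_real_mult of_real_diff of_real_minus)
  also have "\<dots> = r + 2*(1-\<alpha>)*(- ln (1 - r) - r)"
    using U_nonneg[of r] r assms(2) by simp
  also have "\<dots> = r + (\<Sum>n. 2 * (1 - \<alpha>) / real (n + 2) * r ^ (n + 2))"
    using SU[OF ar] by (simp add: sums_iff)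
  finally show "norm (harm (f_ext \<alpha>) (\<lambda>_. 0) (of_real r))
             = r + (\<Sum>n. 2 * (1 - \<alpha>) / real (n + 2) * r ^ (n + 2))" .
  have "f_ext \<alpha> (- of_real r) = - of_real r + of_real (2*(1-\<alpha>)) * (- Ln (1 - (- of_real r)) - (- of_real r))"
    by (rule f_ext_eq[OF n2])
  also have "Ln (1 - (- of_real r)) = of_real (ln (1 + r))"
    using r by (metis Ln_of_real add_pos_nonneg zero_less_one diff_minus_eq_add of_real_1 of_real_add)
  finally have "f_ext \<alpha> (- of_real r) = of_real (- (r + 2*(1-\<alpha>)*(ln (1 + r) - r)))" by (simp add: algebra_simps)
  hence "norm (harm (f_ext \<alpha>) (\<lambda>_. 0) (- of_real r)) = \<bar>r + 2*(1-\<alpha>)*(ln (1 + r) - r)\<bar>"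
    by (simp add: harm_def del: of_real_add of_real_mult of_real_diff of_real_minus)
  also have "\<dots> = r + 2*(1-\<alpha>)*(ln (1 + r) - r)"
    using L_nonneg[OF assms(1,2), of r] r by simp
  also have "\<dots> = r + (\<Sum>n. 2 * (1 - \<alpha>) * (-1) ^ (n + 1) / real (n + 2) * r ^ (n + 2))"
    using SL[OF ar] by (simp add: sums_iff)
  finally show "norm (harm (f_ext \<alpha>) (\<lambda>_. 0) (- of_real r))
             = r + (\<Sum>n. 2 * (1 - \<alpha>) * (-1) ^ (n + 1) / real (n + 2) * r ^ (n + 2))" .
qed


end
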